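(* Let $\Sigma$ be a ranked alphabet, $B$ a bi-locally finite strong bimonoid and $\mathcal{A}$ a $(\Sigma,B)$-wta. Then $[\![\mathcal{A}]\!]^{\mathrm{run}}=[\![\mathcal{R}(\mathcal{A})]\!]^{\mathrm{run}}$.
   Context: Ranked alphabet $\Sigma$ ($\Sigma^{(0)}\ne\emptyset$), trees $T_\Sigma$, positions $\mathrm{pos}(\xi)$; strong bimonoid $(B,\oplus,\otimes,\mathbb{0},\mathbb{1})$ (commutative monoid $(B,\oplus,\mathbb{0})$, monoid $(B,\otimes,\mathbb{1})$, $\mathbb{0}\ne\mathbb{1}$, $\mathbb{0}$ absorbing). $B$ is bi-locally finite if both $(B,\oplus,\mathbb{0})$ and $(B,\otimes,\mathbb{1})$ are locally finite (every finite subset generates a finite submonoid). For $b\in B$, $nb$ is the $n$-fold sum ($0b=\mathbb{0}$); if $\{nb\mid n\in\mathbb{N}\}$ is finite, the index $i(b)$ is the least $i\ge1$ with $ib=(i+k)b$ for some $k\ge1$ and the period $p(b)$ is the least $p\ge1$ with $i(b)b=(i(b)+p)b$. $(\Sigma,B)$-wta $\mathcal{A}=(Q,\delta,F)$: $Q$ finite nonempty, $\delta_k:Q^k\times\Sigma^{(k)}\times Q\to B$, $F:Q\to B$. Runs $\rho:\mathrm{pos}(\xi)\to Q$ ($R_{\mathcal{A}}(\xi)$; $R_{\mathcal{A}}(q,\xi)$ those with $\rho(\varepsilon)=q$), $\rho|_i(w)=\rho(iw)$, $\mathrm{wt}_{\mathcal{A}}(\rho)=\big(\bigotimes_{i=1}^k\mathrm{wt}_{\mathcal{A}}(\rho|_i)\big)\otimes\delta_k(\rho(1)\dots\rho(k),\sigma,\rho(\varepsilon))$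 for $\xi=\sigma(\xi_1,\dots,\xi_k)$; $[\![\mathcal{A}]\!]^{\mathrm{run}}(\xi)=\bigoplus_{\rho\in R_{\mathcal{A}}(\xi)}\mathrm{wt}_{\mathcal{A}}(\rho)\otimes F_{\rho(\varepsilon)}$. $H_{\mathcal{A}}$: smallest subset of $B$ containing $\bigcup_k\mathrm{im}(\delta_k)$ and closed under $\otimes$. When $H_{\mathcal{A}}$ is finite and every element of $H_{\mathcal{A}}\otimes\mathrm{im}(F)$ has finite order in $(B,\oplus,\mathbb{0})$ (the finite order property; it holds when $B$ is bi-locally finite), define $i_{\mathcal{A}}=\max\{i(b)\mid b\in H_{\mathcal{A}}\otimes\mathrm{im}(F)\}$, $p_{\mathcal{A}}=\mathrm{lcm}\{p(b)\mid b\in H_{\mathcal{A}}\otimes\mathrm{im}(F)\}$, $J_{\mathcal{A}}(n)=n$ if $n<i_{\mathcal{A}}$, else $i_{\mathcal{A}}+((n-i_{\mathcal{A}})\bmod p_{\mathcal{A}})$; $p_\xi(q,b)=|\{\rho\in R_{\mathcal{A}}(q,\xi)\mid\mathrm{wt}_{\mathcal{A}}(\rho)=b\}|$ and $\pi_\xi(q,b)=J_{\mathcal{A}}(p_\xi(q,b))$ for $(q,b)\in Q\times H_{\mathcal{A}}$. $\mathcal{R}(\mathcal{A})=(Q_{\mathcal{R}},\delta_{\mathcal{R}},F_{\mathcal{R}})$: $Q_{\mathcal{R}}=\{\pi_\xi\mid\xi\in T_\Sigma\}$; $(\delta_{\mathcal{R}})_k(\pi_{\xi_1}\dots\pi_{\xi_k},\sigma,\pi)=\mathbb{1}$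 if $\pi=\pi_{\sigma(\xi_1,\dots,\xi_k)}$ and $\mathbb{0}$ otherwise (independent of the choice of the $\xi_i$); $(F_{\mathcal{R}})_{\pi_\xi}=\bigoplus_{(q,b)\in Q\times H_{\mathcal{A}}}\pi_\xi(q,b)(b\otimes F_q)$. *)

theory Defs
  imports Main "HOL-Library.FuncSet"
begin

class strong_bimonoid = comm_monoid_add + monoid_mult + mult_zero + zero_neq_one

inductive_set add_submonoid :: "'a::comm_monoid_add set \<Rightarrow> 'a set" for S where
  zero: "0 \<in> add_submonoid S"
| gen: "a \<in> S \<Longrightarrow> a \<in> add_submonoid S"
| add: "a \<in> add_submonoid S \<Longrightarrow> b \<in> add_submonoid S \<Longrightarrow> a + b \<in> add_submonoid S"

inductive_set mult_submonoid :: "'a::monoid_mult set \<Rightarrow> 'a set" for S where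
  one: "1 \<in> mult_submonoid S"
| gen: "a \<in> S \<Longrightarrow> a \<in> mult_submonoid S"
| mult: "a \<in> mult_submonoid S \<Longrightarrow> b \<in> mult_submonoid S \<Longrightarrow> a * b \<in> mult_submonoid S"

definition bi_locally_finite :: "'a::strong_bimonoid itself \<Rightarrow> bool" where
  "bi_locally_finite _ \<longleftrightarrow>
     (\<forall>S::'a set. finite S \<longrightarrow> finite (add_submonoid S)) \<and>
     (\<forall>S::'a set. finite S \<longrightarrow> finite (mult_submonoid S))"

inductive_set mult_closure :: "'a::times set \<Rightarrow> 'a set" for S where
  gen: "a \<in> S \<Longrightarrow> a \<in> mult_closure S"
| mult: "a \<in> mult_closure S \<Longrightarrow> b \<in> mult_closure S \<Longrightarrow> a * b \<in> mult_closure S"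

fun nmul :: "nat \<Rightarrow> 'a::comm_monoid_add \<Rightarrow> 'a" where
  "nmul 0 b = 0"
| "nmul (Suc n) b = nmul n b + b"

definition idx :: "'a::comm_monoid_add \<Rightarrow> nat" where
  "idx b = (LEAST i. 1 \<le> i \<and> (\<exists>k\<ge>1. nmul i b = nmul (i + k) b))"

definition per :: "'a::comm_monoid_add \<Rightarrow> nat" where
  "per b = (LEAST p. 1 \<le> p \<and> nmul (idx b) b = nmul (idx b + p) b)"

datatype 'f tree = Nd 'f "'f tree list"

definition ranked_alphabet :: "'f set \<Rightarrow> ('f \<Rightarrow> nat) \<Rightarrow> bool" where
  "ranked_alphabet Sig rk \<longleftrightarrow> finite Sig \<and> (\<exists>f\<in>Sig. rk f = 0)"

inductive_set trees :: "'f set \<Rightarrow> ('f \<Rightarrow> nat) \<Rightarrow> 'f tree set" for Sig rk where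
  "f \<in> Sig \<Longrightarrow> length ts = rk f \<Longrightarrow> (\<forall>t\<in>set ts. t \<in> trees Sig rk) \<Longrightarrow> Nd f ts \<in> trees Sig rk"

text \<open>Positions (children numbered from 1).\<close>
inductive is_pos :: "'f tree \<Rightarrow> nat list \<Rightarrow> bool" where
  root: "is_pos t []"
| child: "1 \<le> i \<Longrightarrow> i \<le> length ts \<Longrightarrow> is_pos (ts ! (i - 1)) w \<Longrightarrow> is_pos (Nd f ts) (i # w)"

definition pos :: "'f tree \<Rightarrow> nat list set" where
  "pos t = {w. is_pos t w}"

text \<open>delta qs f q stands for delta_k(qs, f, q) with k = length qs = rk f.\<close>
definition wta :: "'f set \<Rightarrow> ('f \<Rightarrow> nat) \<Rightarrow> 'q set \<Rightarrow> ('q list \<Rightarrow> 'f \<Rightarrow> 'q \<Rightarrow> 'b) \<Rightarrow> ('q \<Rightarrow> 'b) \<Rightarrow> bool" where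
  "wta Sig rk Q \<delta> F \<longleftrightarrow> finite Q \<and> Q \<noteq> {}"

definition runs :: "'q set \<Rightarrow> 'f tree \<Rightarrow> (nat list \<Rightarrow> 'q) set" where
  "runs Q t = pos t \<rightarrow>\<^sub>E Q"

definition runs_at :: "'q set \<Rightarrow> 'q \<Rightarrow> 'f tree \<Rightarrow> (nat list \<Rightarrow> 'q) set" where
  "runs_at Q q t = {\<rho> \<in> runs Q t. \<rho> [] = q}"

fun run_wt :: "('q list \<Rightarrow> 'f \<Rightarrow> 'q \<Rightarrow> 'b::monoid_mult) \<Rightarrow> 'f tree \<Rightarrow> (nat list \<Rightarrow> 'q) \<Rightarrow> 'b" where
  "run_wt \<delta> (Nd f ts) = (\<lambda>\<rho>.
     prod_list (map (\<lambda>(i, g). g (\<lambda>w. \<rho> (i # w))) (zip [1..<Suc (length ts)] (map (run_wt \<delta>) ts)))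
     * \<delta> (map (\<lambda>i. \<rho> [i]) [1..<Suc (length ts)]) f (\<rho> []))"

definition run_sem :: "'q set \<Rightarrow> ('q list \<Rightarrow> 'f \<Rightarrow> 'q \<Rightarrow> 'b::strong_bimonoid) \<Rightarrow> ('q \<Rightarrow> 'b) \<Rightarrow> 'f tree \<Rightarrow> 'b" where
  "run_sem Q \<delta> F t = (\<Sum>\<rho>\<in>runs Q t. run_wt \<delta> t \<rho> * F (\<rho> []))"

definition H_A :: "'f set \<Rightarrow> ('f \<Rightarrow> nat) \<Rightarrow> 'q set \<Rightarrow> ('q list \<Rightarrow> 'f \<Rightarrow> 'q \<Rightarrow> 'b::strong_bimonoid) \<Rightarrow> 'b set" where
  "H_A Sig rk Q \<delta> = mult_closure
     {\<delta> qs f q | qs f q. f \<in> Sig \<and> length qs = rk f \<and> set qs \<subseteq> Q \<and> q \<in> Q}"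

definition HF_A :: "'f set \<Rightarrow> ('f \<Rightarrow> nat) \<Rightarrow> 'q set \<Rightarrow> ('q list \<Rightarrow> 'f \<Rightarrow> 'q \<Rightarrow> 'b::strong_bimonoid) \<Rightarrow> ('q \<Rightarrow> 'b) \<Rightarrow> 'b set" where
  "HF_A Sig rk Q \<delta> F = {h * F q | h q. h \<in> H_A Sig rk Q \<delta> \<and> q \<in> Q}"

definition i_A where
  "i_A Sig rk Q \<delta> F = Max (idx ` HF_A Sig rk Q \<delta> F)"

definition p_A where
  "p_A Sig rk Q \<delta> F = Lcm (per ` HF_A Sig rk Q \<delta> F)"

definition J_A :: "'f set \<Rightarrow> ('f \<Rightarrow> nat) \<Rightarrow> 'q set \<Rightarrow> ('q list \<Rightarrow> 'f \<Rightarrow> 'q \<Rightarrow> 'b::strong_bimonoid) \<Rightarrow> ('q \<Rightarrow> 'b) \<Rightarrow> nat \<Rightarrow> nat" where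
  "J_A Sig rk Q \<delta> F n =
     (if n < i_A Sig rk Q \<delta> F then n
      else i_A Sig rk Q \<delta> F + ((n - i_A Sig rk Q \<delta> F) mod p_A Sig rk Q \<delta> F))"

definition p_xi :: "'q set \<Rightarrow> ('q list \<Rightarrow> 'f \<Rightarrow> 'q \<Rightarrow> 'b::strong_bimonoid) \<Rightarrow> 'f tree \<Rightarrow> 'q \<Rightarrow> 'b \<Rightarrow> nat" where
  "p_xi Q \<delta> t q b = card {\<rho> \<in> runs_at Q q t. run_wt \<delta> t \<rho> = b}"

text \<open>pi_xi as a function on Q x H_A (extended by 0 outside Q x H_A).\<close>
definition pi_xi :: "'f set \<Rightarrow> ('f \<Rightarrow> nat) \<Rightarrow> 'q set \<Rightarrow> ('q list \<Rightarrow> 'f \<Rightarrow> 'q \<Rightarrow> 'b::strong_bimonoid) \<Rightarrow> ('q \<Rightarrow> 'b) \<Rightarrow> 'f tree \<Rightarrow> ('q \<times> 'b \<Rightarrow> nat)" where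
  "pi_xi Sig rk Q \<delta> F t = (\<lambda>(q, b).
     if q \<in> Q \<and> b \<in> H_A Sig rk Q \<delta> then J_A Sig rk Q \<delta> F (p_xi Q \<delta> t q b) else 0)"

definition R_states where
  "R_states Sig rk Q \<delta> F = pi_xi Sig rk Q \<delta> F ` trees Sig rk"

text \<open>delta_R(pi_xi1 ... pi_xik, sigma, pi) = 1 iff pi = pi_{sigma(xi1,...,xik)}; representatives chosen
  by Hilbert choice (the value is independent of the choice).  Arguments outside the domain
  Q_R^k x Sigma^(k) x Q_R get 0.\<close>
definition R_delta where
  "R_delta Sig rk Q \<delta> F ps f p =
     (if f \<in> Sig \<and> length ps = rk f \<and> set ps \<subseteq> R_states Sig rk Q \<delta> F \<and> p \<in> R_states Sig rk Q \<delta> F then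
        (let ts = (SOME ts. length ts = length ps \<and>
                     (\<forall>i<length ps. ts ! i \<in> trees Sig rk \<and> pi_xi Sig rk Q \<delta> F (ts ! i) = ps ! i))
         in if p = pi_xi Sig rk Q \<delta> F (Nd f ts) then 1 else 0)
      else 0)"

definition R_final where
  "R_final Sig rk Q \<delta> F p =
     (\<Sum>(q, b)\<in>Q \<times> H_A Sig rk Q \<delta>. nmul (p (q, b)) (b * F q))"

end

theory Submission
  imports Defs
begin

lemma pos_Nd: "w \<in> pos (Nd f ts) \<longleftrightarrow> w = [] \<or> (\<exists>i w'. w = Suc i # w' \<and> i < length ts \<and> w' \<in> pos (ts ! i))"
proof
  assume "w \<in> pos (Nd f ts)"
  then have "is_pos (Nd f ts) w" by (simp add: pos_def)
  then show "w = [] \<or> (\<exists>i w'. w = Suc i # w' \<and> i < length ts \<and> w' \<in> pos (ts ! i))"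
  proof cases
    case root then show ?thesis by simp
  next
    case (child i w') then show ?thesis
      by (intro disjI2 exI[of _ "i - 1"] exI[of _ w']) (auto simp: pos_def)
  qed
next
  assume "w = [] \<or> (\<exists>i w'. w = Suc i # w' \<and> i < length ts \<and> w' \<in> pos (ts ! i))"
  then show "w \<in> pos (Nd f ts)"
    by (auto simp: pos_def intro: is_pos.intros)
qed

lemma Nil_pos[simp]: "[] \<in> pos t"
  unfolding pos_def by (simp add: is_pos.root)

lemma Cons_pos[simp]: "Suc i # w \<in> pos (Nd f ts) \<longleftrightarrow> i < length ts \<and> w \<in> pos (ts ! i)"
  by (auto simp: pos_Nd)

lemma zero_Cons_pos[simp]: "0 # w \<notin> pos (Nd f ts)"
  by (auto simp: pos_Nd)

lemma finite_pos: "finite (pos t)"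
proof (induction t)
  case (Nd f ts)
  have "pos (Nd f ts) = insert [] (\<Union>i<length ts. (\<lambda>w. Suc i # w) ` pos (ts ! i))"
    by (auto simp: pos_Nd image_iff) blast
  then show ?case using Nd by auto
qed


lemma run_wt_Nd: "run_wt \<delta> (Nd f ts) \<rho> =
  prod_list (map (\<lambda>i. run_wt \<delta> (ts ! i) (\<lambda>w. \<rho> (Suc i # w))) [0..<length ts])
  * \<delta> (map (\<lambda>i. \<rho> [Suc i]) [0..<length ts]) f (\<rho> [])"
proof -
  have 1: "zip (map Suc [0..<length ts]) (map (run_wt \<delta>) ts) = map (\<lambda>i. (Suc i, run_wt \<delta> (ts ! i))) [0..<length ts]"
    by (rule nth_equalityI) simp_all
  have 2: "[1..<Suc (length ts)] = map Suc [0..<length ts]"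
    by (simp add: map_Suc_upt)
  show ?thesis apply (subst run_wt.simps) unfolding 2 1 map_map o_def prod.case by (rule refl)
qed


lemma run_wt_local: "(\<And>w. w \<in> pos t \<Longrightarrow> \<rho> w = \<rho>' w) \<Longrightarrow> run_wt \<delta> t \<rho> = run_wt \<delta> t \<rho>'"
proof (induction t arbitrary: \<rho> \<rho>')
  case (Nd f ts)
  have a: "run_wt \<delta> (ts ! i) (\<lambda>w. \<rho> (Suc i # w)) = run_wt \<delta> (ts ! i) (\<lambda>w. \<rho>' (Suc i # w))"
    if "i < length ts" for i
  proof (rule Nd.IH)
    show "ts ! i \<in> set ts" using that by simp
    fix w assume "w \<in> pos (ts ! i)"
    then show "\<rho> (Suc i # w) = \<rho>' (Suc i # w)" using that by (intro Nd.prems) simp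
  qed
  have b: "\<rho> [Suc i] = \<rho>' [Suc i]" if "i < length ts" for i
    using that by (intro Nd.prems) simp
  have c: "\<rho> [] = \<rho>' []" by (intro Nd.prems) simp
  have d: "map (\<lambda>i. run_wt \<delta> (ts ! i) (\<lambda>w. \<rho> (Suc i # w))) [0..<length ts]
     = map (\<lambda>i. run_wt \<delta> (ts ! i) (\<lambda>w. \<rho>' (Suc i # w))) [0..<length ts]"
    by (rule map_cong[OF refl]) (simp add: a)
  have e: "map (\<lambda>i. \<rho> [Suc i]) [0..<length ts] = map (\<lambda>i. \<rho>' [Suc i]) [0..<length ts]"
    by (rule map_cong[OF refl]) (simp add: b)
  show ?case unfolding run_wt_Nd d e c by (rule refl)
qed


definition jf :: "nat \<Rightarrow> nat \<Rightarrow> nat \<Rightarrow> nat" where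
  "jf i p n = (if n < i then n else i + (n - i) mod p)"

lemma jf_idem: "jf i p (jf i p n) = jf i p n"
  unfolding jf_def by auto

lemma jf_0: "jf i p 0 = 0"
  unfolding jf_def by auto

lemma jf_less_iff: "jf i p x < i \<longleftrightarrow> x < i"
  unfolding jf_def by auto

lemma jf_small: "x < i \<Longrightarrow> jf i p x = x"
  unfolding jf_def by auto

lemma jf_large: "\<not> x < i \<Longrightarrow> jf i p x = i + (x - i) mod p"
  unfolding jf_def by auto

lemma jf_eq_small: "jf i p n = jf i p m \<Longrightarrow> n < i \<or> m < i \<Longrightarrow> n = m"
  by (metis jf_less_iff jf_small)

lemma jf_cong_add:
  assumes "jf i p n = jf i p m" shows "jf i p (n + c) = jf i p (m + c)"
proof (cases "n < i \<or> m < i")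
  case True
  then have "n = m" using assms by (rule jf_eq_small[rotated])
  then show ?thesis by simp
next
  case False
  then have h: "(n - i) mod p = (m - i) mod p" using assms by (simp add: jf_large)
  have e: "(n - i + c) mod p = (m - i + c) mod p" using h by (metis mod_add_left_eq)
  have e1: "n + c - i = n - i + c" "m + c - i = m - i + c" using False by auto
  have e2: "\<not> n + c < i" "\<not> m + c < i" using False by auto
  have "jf i p (n + c) = i + (n + c - i) mod p" using e2(1) by (rule jf_large)
  also have "\<dots> = i + (m + c - i) mod p" unfolding e1 e ..
  also have "\<dots> = jf i p (m + c)" using e2(2) by (rule jf_large[symmetric])
  finally show ?thesis .
qed

lemma jf_cong_mult:
  assumes "jf i p n = jf i p m" shows "jf i p (n * c) = jf i p (m * c)"
proof (cases "n < i \<or> m < i")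
  case True
  then have "n = m" using assms by (rule jf_eq_small[rotated])
  then show ?thesis by simp
next
  case False
  show ?thesis
  proof (cases "c = 0")
    case True then show ?thesis by simp
  next
    case c: False
    have h: "(n - i) mod p = (m - i) mod p" using False assms by (simp add: jf_large)
    have e1: "((n - i) * c + (i * c - i)) mod p = ((m - i) * c + (i * c - i)) mod p"
    proof -
      have "(n - i) * c mod p = (m - i) * c mod p"
        by (metis h mod_mult_left_eq)
      then show ?thesis by (metis mod_add_left_eq)
    qed
    have nc: "n \<le> n * c" "m \<le> m * c" using c by simp_all
    have ge: "\<not> n * c < i" "\<not> m * c < i" using False nc by linarith+
    have ic: "i \<le> i * c" using c by simp
    have e2: "n * c - i = (n - i) * c + (i * c - i)"
    proof -
      have "n * c = (n - i) * c + i * c" using False by (simp add: diff_mult_distrib)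
      then show ?thesis using ic by linarith
    qed
    have e3: "m * c - i = (m - i) * c + (i * c - i)"
    proof -
      have "m * c = (m - i) * c + i * c" using False by (simp add: diff_mult_distrib)
      then show ?thesis using ic by linarith
    qed
    have "jf i p (n * c) = i + (n * c - i) mod p" using ge(1) by (rule jf_large)
    also have "\<dots> = i + (m * c - i) mod p" unfolding e2 e3 e1 ..
    also have "\<dots> = jf i p (m * c)" using ge(2) by (rule jf_large[symmetric])
    finally show ?thesis .
  qed
qed

lemma jf_add: "jf i p (a + b) = jf i p (jf i p a + jf i p b)"
proof -
  have "jf i p (jf i p a + b) = jf i p (a + b)" by (rule jf_cong_add[OF jf_idem])
  moreover have "jf i p (jf i p b + jf i p a) = jf i p (b + jf i p a)" by (rule jf_cong_add[OF jf_idem])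
  ultimately show ?thesis by (simp add: add.commute)
qed

lemma jf_mult: "jf i p (a * b) = jf i p (jf i p a * jf i p b)"
proof -
  have "jf i p (jf i p a * b) = jf i p (a * b)" by (rule jf_cong_mult[OF jf_idem])
  moreover have "jf i p (jf i p b * jf i p a) = jf i p (b * jf i p a)" by (rule jf_cong_mult[OF jf_idem])
  ultimately show ?thesis by (simp add: mult.commute)
qed

lemma jf_sum: "jf i p (sum g A) = jf i p (\<Sum>x\<in>A. jf i p (g x))"
proof (induction A rule: infinite_finite_induct)
  case (insert x F)
  have "jf i p (sum g (insert x F)) = jf i p (g x + sum g F)" using insert by simp
  also have "\<dots> = jf i p (jf i p (g x) + jf i p (sum g F))" by (rule jf_add)
  also have "\<dots> = jf i p (jf i p (jf i p (g x)) + jf i p (\<Sum>x\<in>F. jf i p (g x)))"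
    using insert by (simp add: jf_idem)
  also have "\<dots> = jf i p (jf i p (g x) + (\<Sum>x\<in>F. jf i p (g x)))" by (rule jf_add[symmetric])
  also have "\<dots> = jf i p (\<Sum>x\<in>insert x F. jf i p (g x))" using insert by simp
  finally show ?case .
qed auto

lemma jf_prod: "jf i p (prod g A) = jf i p (\<Prod>x\<in>A. jf i p (g x))"
proof (induction A rule: infinite_finite_induct)
  case (insert x F)
  have "jf i p (prod g (insert x F)) = jf i p (g x * prod g F)" using insert by simp
  also have "\<dots> = jf i p (jf i p (g x) * jf i p (prod g F))" by (rule jf_mult)
  also have "\<dots> = jf i p (jf i p (jf i p (g x)) * jf i p (\<Prod>x\<in>F. jf i p (g x)))"
    using insert by (simp add: jf_idem)
  also have "\<dots> = jf i p (jf i p (g x) * (\<Prod>x\<in>F. jf i p (g x)))" by (rule jf_mult[symmetric])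
  also have "\<dots> = jf i p (\<Prod>x\<in>insert x F. jf i p (g x))" using insert by simp
  finally show ?case .
qed auto


lemma nmul_add: "nmul (a + b) c = nmul a c + nmul b c"
  by (induction b) (simp_all add: add.assoc)

lemma nmul_in: "nmul n c \<in> add_submonoid {c}"
  by (induction n) (auto intro: add_submonoid.intros)

lemma sum_const_nmul: "(\<Sum>x\<in>A. c) = nmul (card A) c"
proof (induction A rule: infinite_finite_induct)
  case (insert x F)
  then show ?case by (simp add: add.commute)
qed auto

lemma exists_rep:
  assumes "finite (add_submonoid {c})"
  shows "\<exists>i\<ge>1. \<exists>k\<ge>1. nmul i c = nmul (i + k) c"
proof -
  let ?f = "\<lambda>n. nmul (Suc n) c"
  have "\<not> inj ?f"
  proof
    assume "inj ?f"
    moreover have "range ?f \<subseteq> add_submonoid {c}" using nmul_in by blast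
    ultimately have "finite (UNIV :: nat set)"
      using assms by (metis finite_imageD finite_subset)
    then show False by simp
  qed
  then obtain a b where ab: "a \<noteq> b" "?f a = ?f b" unfolding inj_def by blast
  show ?thesis
  proof (cases "a < b")
    case True
    then show ?thesis using ab by (intro exI[of _ "Suc a"] conjI exI[of _ "b - a"]) auto
  next
    case False
    then have "b < a" using ab by simp
    then show ?thesis using ab by (intro exI[of _ "Suc b"] conjI exI[of _ "a - b"]) auto
  qed
qed

lemma idx_props:
  assumes "finite (add_submonoid {c})"
  shows "1 \<le> idx c" "\<exists>k\<ge>1. nmul (idx c) c = nmul (idx c + k) c"
proof -
  have "1 \<le> idx c \<and> (\<exists>k\<ge>1. nmul (idx c) c = nmul (idx c + k) c)"
    unfolding idx_def by (rule LeastI_ex) (rule exists_rep[OF assms])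
  then show "1 \<le> idx c" "\<exists>k\<ge>1. nmul (idx c) c = nmul (idx c + k) c" by auto
qed

lemma per_props:
  assumes "finite (add_submonoid {c})"
  shows "1 \<le> per c" "nmul (idx c) c = nmul (idx c + per c) c"
proof -
  obtain k where "k \<ge> 1" "nmul (idx c) c = nmul (idx c + k) c" using idx_props(2)[OF assms] by blast
  then have "1 \<le> per c \<and> nmul (idx c) c = nmul (idx c + per c) c"
    unfolding per_def by (intro LeastI) auto
  then show "1 \<le> per c" "nmul (idx c) c = nmul (idx c + per c) c" by auto
qed

lemma nmul_periodic:
  assumes "finite (add_submonoid {c})" "idx c \<le> n"
  shows "nmul (n + j * per c) c = nmul n c"
proof (induction j)
  case (Suc j)
  obtain d where d: "n = idx c + d" using assms(2) le_Suc_ex by blast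
  have "nmul (n + Suc j * per c) c = nmul (idx c + per c + (d + j * per c)) c"
    by (simp add: d algebra_simps)
  also have "\<dots> = nmul (idx c + per c) c + nmul (d + j * per c) c" by (rule nmul_add)
  also have "\<dots> = nmul (idx c) c + nmul (d + j * per c) c" using per_props(2)[OF assms(1)] by simp
  also have "\<dots> = nmul (n + j * per c) c" by (simp add: d nmul_add add.assoc)
  finally show ?case using Suc by simp
qed simp

lemma nmul_jf:
  assumes "finite (add_submonoid {c})" "idx c \<le> i" "per c dvd p"
  shows "nmul (jf i p n) c = nmul n c"
proof (cases "n < i")
  case True then show ?thesis by (simp add: jf_small)
next
  case False
  obtain m where m: "p = per c * m" using assms(3) by blast
  let ?r = "(n - i) mod p" and ?q = "(n - i) div p"
  have e1: "n - i = ?q * p + ?r" by (rule div_mult_mod_eq[symmetric])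
  have e2: "?q * p = (?q * m) * per c" unfolding m by (simp add: ac_simps)
  have n: "n = (i + ?r) + (?q * m) * per c"
    using False e1 e2 by linarith
  have "nmul n c = nmul (i + ?r) c"
    by (subst n, rule nmul_periodic[OF assms(1)]) (use assms(2) in simp)
  then show ?thesis using False by (simp add: jf_large)
qed


lemma mult_closure_sub: "mult_closure S \<subseteq> mult_submonoid S"
proof
  fix x assume "x \<in> mult_closure S" then show "x \<in> mult_submonoid S"
    by induction (auto intro: mult_submonoid.intros)
qed

locale wsetup =
  fixes Sig :: "'f set" and rk :: "'f \<Rightarrow> nat"
    and Q :: "'q set" and \<delta> :: "'q list \<Rightarrow> 'f \<Rightarrow> 'q \<Rightarrow> 'b::strong_bimonoid" and F :: "'q \<Rightarrow> 'b"
  assumes finSig: "finite Sig" and finQ: "finite Q" and blf: "bi_locally_finite TYPE('b)"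
begin

abbreviation "H \<equiv> H_A Sig rk Q \<delta>"
abbreviation "HF \<equiv> HF_A Sig rk Q \<delta> F"
abbreviation "iA \<equiv> i_A Sig rk Q \<delta> F"
abbreviation "pA \<equiv> p_A Sig rk Q \<delta> F"
abbreviation "J \<equiv> J_A Sig rk Q \<delta> F"

lemma gen_finite: "finite {\<delta> qs f q | qs f q. f \<in> Sig \<and> length qs = rk f \<and> set qs \<subseteq> Q \<and> q \<in> Q}"
proof -
  let ?A = "(\<Union>f\<in>Sig. {qs. set qs \<subseteq> Q \<and> length qs = rk f}) \<times> Sig \<times> Q"
  have "finite ?A" using finSig finQ by (auto intro: finite_lists_length_eq)
  moreover have "{\<delta> qs f q | qs f q. f \<in> Sig \<and> length qs = rk f \<and> set qs \<subseteq> Q \<and> q \<in> Q}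
      \<subseteq> (\<lambda>(qs, f, q). \<delta> qs f q) ` ?A" by force
  ultimately show ?thesis by (meson finite_imageI finite_subset)
qed

lemma gen_in_H: "f \<in> Sig \<Longrightarrow> length qs = rk f \<Longrightarrow> set qs \<subseteq> Q \<Longrightarrow> q \<in> Q \<Longrightarrow> \<delta> qs f q \<in> H"
  unfolding H_A_def by (rule mult_closure.gen) blast

lemma H_mult: "a \<in> H \<Longrightarrow> b \<in> H \<Longrightarrow> a * b \<in> H"
  unfolding H_A_def by (rule mult_closure.mult)

lemma finite_H: "finite H"
proof -
  have "finite (mult_submonoid {\<delta> qs f q | qs f q. f \<in> Sig \<and> length qs = rk f \<and> set qs \<subseteq> Q \<and> q \<in> Q})"
    using blf gen_finite unfolding bi_locally_finite_def by blast
  then show ?thesis unfolding H_A_def using mult_closure_sub finite_subset by blast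
qed

lemma finite_HF: "finite HF"
proof -
  have "HF = (\<lambda>(h, q). h * F q) ` (H \<times> Q)" unfolding HF_A_def by force
  then show ?thesis using finite_H finQ by simp
qed

lemma HF_fin_add: "finite (add_submonoid {c::'b})"
  using blf unfolding bi_locally_finite_def by simp

lemma J_eq: "J n = jf iA pA n"
  unfolding J_A_def jf_def by simp

lemma nmul_J: "c \<in> HF \<Longrightarrow> nmul (J n) c = nmul n c"
  unfolding J_eq
proof (rule nmul_jf[OF HF_fin_add])
  assume c: "c \<in> HF"
  show "idx c \<le> iA" unfolding i_A_def using c finite_HF by (intro Max_ge) auto
  show "per c dvd pA" unfolding p_A_def using c by (intro dvd_Lcm) auto
qed

lemma pA_pos: "pA > 0"
proof -
  have "0 \<notin> per ` HF" using per_props(1)[OF HF_fin_add] by (metis imageE not_one_le_zero)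
  then have "Lcm (per ` HF) \<noteq> 0" using finite_HF by (simp add: Lcm_0_iff)
  then show ?thesis unfolding p_A_def by simp
qed

lemma J_bound: "J n < iA + pA"
  unfolding J_eq jf_def using pA_pos by auto

end


lemma finite_runs: "finite Q \<Longrightarrow> finite (runs Q t)"
  unfolding runs_def by (intro finite_PiE finite_pos) auto

definition Phi :: "'f tree list \<Rightarrow> (nat list \<Rightarrow> 'q) \<Rightarrow> nat \<Rightarrow> nat list \<Rightarrow> 'q" where
  "Phi ts \<rho> = (\<lambda>i\<in>{..<length ts}. restrict (\<lambda>w. \<rho> (Suc i # w)) (pos (ts ! i)))"

definition Psi :: "'f \<Rightarrow> 'f tree list \<Rightarrow> 'q \<Rightarrow> (nat \<Rightarrow> nat list \<Rightarrow> 'q) \<Rightarrow> nat list \<Rightarrow> 'q" where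
  "Psi f ts q \<sigma> = restrict (\<lambda>w. case w of [] \<Rightarrow> q | j # w' \<Rightarrow> \<sigma> (j - 1) w') (pos (Nd f ts))"

lemma runs_child: "\<rho> \<in> runs Q (Nd f ts) \<Longrightarrow> i < length ts \<Longrightarrow> restrict (\<lambda>w. \<rho> (Suc i # w)) (pos (ts ! i)) \<in> runs Q (ts ! i)"
  unfolding runs_def by (auto simp: PiE_iff)

lemma Phi_in: "\<rho> \<in> runs Q (Nd f ts) \<Longrightarrow> Phi ts \<rho> \<in> (\<Pi>\<^sub>E i\<in>{..<length ts}. runs Q (ts ! i))"
  unfolding Phi_def using runs_child by (auto simp: PiE_iff)

lemma Psi_in: "q \<in> Q \<Longrightarrow> \<sigma> \<in> (\<Pi>\<^sub>E i\<in>{..<length ts}. runs Q (ts ! i)) \<Longrightarrow> Psi f ts q \<sigma> \<in> runs_at Q q (Nd f ts)"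
  unfolding runs_at_def runs_def
proof (intro CollectI conjI PiE_I)
  assume q: "q \<in> Q" and s: "\<sigma> \<in> (\<Pi>\<^sub>E i\<in>{..<length ts}. pos (ts ! i) \<rightarrow>\<^sub>E Q)"
  fix w assume "w \<in> pos (Nd f ts)"
  then consider "w = []" | i w' where "w = Suc i # w'" "i < length ts" "w' \<in> pos (ts ! i)"
    unfolding pos_Nd by blast
  then show "Psi f ts q \<sigma> w \<in> Q"
  proof cases
    case 1 then show ?thesis using q by (simp add: Psi_def)
  next
    case 2
    then have "\<sigma> i \<in> pos (ts ! i) \<rightarrow>\<^sub>E Q" using s by blast
    then show ?thesis using 2 by (auto simp: Psi_def)
  qed
next
  show "Psi f ts q \<sigma> [] = q" by (simp add: Psi_def)
next
  fix w assume "w \<notin> pos (Nd f ts)"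
  then show "Psi f ts q \<sigma> w = undefined" by (simp add: Psi_def)
qed

lemma pos_NdE:
  assumes "w \<in> pos (Nd f ts)"
  obtains "w = []" | i w' where "w = Suc i # w'" "i < length ts" "w' \<in> pos (ts ! i)"
  using assms unfolding pos_Nd by blast

lemma Psi_Phi: "\<rho> \<in> runs_at Q q (Nd f ts) \<Longrightarrow> Psi f ts q (Phi ts \<rho>) = \<rho>"
proof (rule ext)
  fix w assume r: "\<rho> \<in> runs_at Q q (Nd f ts)"
  then have ext: "\<rho> \<in> extensional (pos (Nd f ts))" and r0: "\<rho> [] = q"
    unfolding runs_at_def runs_def by (auto simp: PiE_iff)
  show "Psi f ts q (Phi ts \<rho>) w = \<rho> w"
  proof (cases "w \<in> pos (Nd f ts)")
    case False 
    then have "\<rho> w = undefined" using ext by (rule extensional_arb[rotated])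
    then show ?thesis using False by (simp add: Psi_def)
  next
    case True
    then show ?thesis
    proof (cases rule: pos_NdE)
      case 1 then show ?thesis using r0 by (simp add: Psi_def)
    next
      case (2 i w') 
      have "Psi f ts q (Phi ts \<rho>) w = Phi ts \<rho> i w'" using 2 by (simp add: Psi_def)
      also have "\<dots> = \<rho> w" using 2 by (simp add: Phi_def)
      finally show ?thesis .
    qed
  qed
qed

lemma Phi_Psi: "\<sigma> \<in> (\<Pi>\<^sub>E i\<in>{..<length ts}. runs Q (ts ! i)) \<Longrightarrow> Phi ts (Psi f ts q \<sigma>) = \<sigma>"
proof (rule ext)
  fix i assume s: "\<sigma> \<in> (\<Pi>\<^sub>E i\<in>{..<length ts}. runs Q (ts ! i))"
  show "Phi ts (Psi f ts q \<sigma>) i = \<sigma> i"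
  proof (cases "i < length ts")
    case False then show ?thesis using s by (simp add: Phi_def PiE_iff extensional_def)
  next
    case True
    then have si: "\<sigma> i \<in> extensional (pos (ts ! i))" using s unfolding runs_def by (auto simp: PiE_iff)
    show ?thesis
    proof (rule ext)
      fix w show "Phi ts (Psi f ts q \<sigma>) i w = \<sigma> i w"
      proof (cases "w \<in> pos (ts ! i)")
        case True2: True
        then show ?thesis using True by (simp add: Phi_def Psi_def)
      next
        case False
        then have "\<sigma> i w = undefined" using si by (simp add: extensional_def)
        then show ?thesis using False True by (simp add: Phi_def)
      qed
    qed
  qed
qed

lemma Phi_bij: "q \<in> Q \<Longrightarrow> bij_betw (Phi ts) (runs_at Q q (Nd f ts)) (\<Pi>\<^sub>E i\<in>{..<length ts}. runs Q (ts ! i))"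
proof (rule bij_betw_byWitness[where f' = "Psi f ts q"])
  assume q: "q \<in> Q"
  show "\<forall>a\<in>runs_at Q q (Nd f ts). Psi f ts q (Phi ts a) = a" by (simp add: Psi_Phi)
  show "\<forall>a'\<in>\<Pi>\<^sub>E i\<in>{..<length ts}. runs Q (ts ! i). Phi ts (Psi f ts q a') = a'" by (simp add: Phi_Psi)
  show "Phi ts ` runs_at Q q (Nd f ts) \<subseteq> (\<Pi>\<^sub>E i\<in>{..<length ts}. runs Q (ts ! i))"
  proof (rule image_subsetI)
    fix \<rho> assume "\<rho> \<in> runs_at Q q (Nd f ts)"
    then have "\<rho> \<in> runs Q (Nd f ts)" unfolding runs_at_def by simp
    then show "Phi ts \<rho> \<in> (\<Pi>\<^sub>E i\<in>{..<length ts}. runs Q (ts ! i))" by (rule Phi_in)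
  qed
  show "Psi f ts q ` (\<Pi>\<^sub>E i\<in>{..<length ts}. runs Q (ts ! i)) \<subseteq> runs_at Q q (Nd f ts)"
    using Psi_in[OF q] by (rule image_subsetI)
qed


lemma prod_list_mult_mem:
  assumes "\<And>a b. a \<in> S \<Longrightarrow> b \<in> S \<Longrightarrow> a * b \<in> S"
  shows "(\<forall>x\<in>set xs. x \<in> S) \<Longrightarrow> d \<in> S \<Longrightarrow> prod_list xs * d \<in> (S :: 'a::monoid_mult set)"
proof (induction xs)
  case (Cons a xs)
  then have "prod_list xs * d \<in> S" by simp
  then have "a * (prod_list xs * d) \<in> S" using Cons.prems assms by simp
  then show ?case by (simp add: mult.assoc)
qed simp

lemma runs_root: "\<rho> \<in> runs Q t \<Longrightarrow> \<rho> [] \<in> Q"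
  unfolding runs_def by (auto simp: PiE_iff)

lemma runs_child_root: "\<rho> \<in> runs Q (Nd f ts) \<Longrightarrow> i < length ts \<Longrightarrow> \<rho> [Suc i] \<in> Q"
  unfolding runs_def by (auto simp: PiE_iff)

lemma run_wt_child: "i < length ts \<Longrightarrow>
  run_wt \<delta> (ts ! i) (\<lambda>w. \<rho> (Suc i # w)) = run_wt \<delta> (ts ! i) (restrict (\<lambda>w. \<rho> (Suc i # w)) (pos (ts ! i)))"
  by (rule run_wt_local) simp

lemma card_PiE_filter:
  assumes I: "finite I" and S: "\<And>i. i \<in> I \<Longrightarrow> finite (S i)"
    and sg: "\<And>i s. i \<in> I \<Longrightarrow> s \<in> S i \<Longrightarrow> sg i s \<in> X i"
    and X: "\<And>i. i \<in> I \<Longrightarrow> finite (X i)"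
  shows "card {\<sigma> \<in> Pi\<^sub>E I S. C (restrict (\<lambda>i. sg i (\<sigma> i)) I)}
       = (\<Sum>x\<in>Pi\<^sub>E I X. if C x then (\<Prod>i\<in>I. card {s \<in> S i. sg i s = x i}) else 0)"
proof -
  define G where "G x = Pi\<^sub>E I (\<lambda>i. {s \<in> S i. sg i s = x i})" for x
  define Y where "Y = {x \<in> Pi\<^sub>E I X. C x}"
  have eq: "{\<sigma> \<in> Pi\<^sub>E I S. C (restrict (\<lambda>i. sg i (\<sigma> i)) I)} = \<Union>(G ` Y)"
  proof (rule set_eqI, rule iffI)
    fix \<sigma> assume "\<sigma> \<in> {\<sigma> \<in> Pi\<^sub>E I S. C (restrict (\<lambda>i. sg i (\<sigma> i)) I)}"
    then have s: "\<sigma> \<in> Pi\<^sub>E I S" and c: "C (restrict (\<lambda>i. sg i (\<sigma> i)) I)" by simp_all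
    have "restrict (\<lambda>i. sg i (\<sigma> i)) I \<in> Pi\<^sub>E I X"
    proof (rule PiE_I)
      fix i assume "i \<in> I" then show "restrict (\<lambda>i. sg i (\<sigma> i)) I i \<in> X i"
        using sg[OF _ PiE_mem[OF s]] by simp
    next
      fix i assume "i \<notin> I" then show "restrict (\<lambda>i. sg i (\<sigma> i)) I i = undefined" by simp
    qed
    then have "restrict (\<lambda>i. sg i (\<sigma> i)) I \<in> Y"
      unfolding Y_def using c by simp
    moreover have "\<sigma> \<in> G (restrict (\<lambda>i. sg i (\<sigma> i)) I)"
      unfolding G_def
    proof (rule PiE_I)
      fix i assume "i \<in> I" then show "\<sigma> i \<in> {s \<in> S i. sg i s = restrict (\<lambda>i. sg i (\<sigma> i)) I i}"
        using PiE_mem[OF s] by simp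
    next
      fix i assume "i \<notin> I" then show "\<sigma> i = undefined" using PiE_arb[OF s] by simp
    qed
    ultimately show "\<sigma> \<in> \<Union>(G ` Y)" by (rule UN_I[where B = G])
  next
    fix \<sigma> assume "\<sigma> \<in> \<Union>(G ` Y)"
    then obtain x where x: "x \<in> Y" and s: "\<sigma> \<in> G x" by (rule UN_E)
    have xP: "x \<in> Pi\<^sub>E I X" and cx: "C x" using x unfolding Y_def by simp_all
    have "restrict (\<lambda>i. sg i (\<sigma> i)) I = x"
    proof (rule ext)
      fix i show "restrict (\<lambda>i. sg i (\<sigma> i)) I i = x i"
      proof (cases "i \<in> I")
        case True then show ?thesis using PiE_mem[OF s[unfolded G_def] True] by simp
      next
        case False then show ?thesis using PiE_arb[OF xP False] by simp
      qed
    qed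
    moreover have "\<sigma> \<in> Pi\<^sub>E I S"
    proof (rule PiE_I)
      fix i assume "i \<in> I" then show "\<sigma> i \<in> S i" using PiE_mem[OF s[unfolded G_def]] by simp
    next
      fix i assume "i \<notin> I" then show "\<sigma> i = undefined" using PiE_arb[OF s[unfolded G_def]] by simp
    qed
    ultimately show "\<sigma> \<in> {\<sigma> \<in> Pi\<^sub>E I S. C (restrict (\<lambda>i. sg i (\<sigma> i)) I)}"
      using cx by simp
  qed
  have finY: "finite Y" unfolding Y_def using I X by (simp add: finite_PiE)
  have finG: "\<forall>x\<in>Y. finite (G x)" unfolding G_def using I S by (simp add: finite_PiE)
  have disj: "\<forall>x\<in>Y. \<forall>y\<in>Y. x \<noteq> y \<longrightarrow> G x \<inter> G y = {}"
  proof (intro ballI impI)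
    fix x y assume x: "x \<in> Y" and y: "y \<in> Y" and xy: "x \<noteq> y"
    show "G x \<inter> G y = {}"
    proof (rule ccontr)
      assume "G x \<inter> G y \<noteq> {}"
      then obtain \<sigma> where sx: "\<sigma> \<in> G x" and sy: "\<sigma> \<in> G y" by auto
      have xP: "x \<in> Pi\<^sub>E I X" using x unfolding Y_def by simp
      have yP: "y \<in> Pi\<^sub>E I X" using y unfolding Y_def by simp
      have "x = y"
      proof (rule ext)
        fix i show "x i = y i"
        proof (cases "i \<in> I")
          case True then show ?thesis
            using PiE_mem[OF sx[unfolded G_def] True] PiE_mem[OF sy[unfolded G_def] True] by simp
        next
          case False then show ?thesis using PiE_arb[OF xP False] PiE_arb[OF yP False] by simp
        qed
      qed
      then show False using xy by simp
    qed
  qed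
  have "card {\<sigma> \<in> Pi\<^sub>E I S. C (restrict (\<lambda>i. sg i (\<sigma> i)) I)} = (\<Sum>x\<in>Y. card (G x))"
    unfolding eq by (rule card_UN_disjoint[OF finY finG disj])
  also have "\<dots> = (\<Sum>x\<in>Y. \<Prod>i\<in>I. card {s \<in> S i. sg i s = x i})"
    unfolding G_def using I by (simp add: card_PiE)
  also have "\<dots> = (\<Sum>x\<in>Pi\<^sub>E I X. if C x then (\<Prod>i\<in>I. card {s \<in> S i. sg i s = x i}) else 0)"
    unfolding Y_def using I X by (simp add: finite_PiE sum.inter_filter)
  finally show ?thesis .
qed

lemma bij_betw_filter_image: "bij_betw h A B \<Longrightarrow> h ` {a \<in> A. P (h a)} = {b \<in> B. P b}"
  unfolding bij_betw_def by auto

definition comb :: "('q list \<Rightarrow> 'f \<Rightarrow> 'q \<Rightarrow> 'b::monoid_mult) \<Rightarrow> 'f \<Rightarrow> nat \<Rightarrow> 'q \<Rightarrow> (nat \<Rightarrow> 'q \<times> 'b) \<Rightarrow> 'b" where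
  "comb \<delta> f k q x = prod_list (map (\<lambda>i. snd (x i)) [0..<k]) * \<delta> (map (\<lambda>i. fst (x i)) [0..<k]) f q"

lemma wt_Phi:
  assumes "\<rho> \<in> runs_at Q q (Nd f ts)"
  shows "run_wt \<delta> (Nd f ts) \<rho> =
    comb \<delta> f (length ts) q (restrict (\<lambda>i. (Phi ts \<rho> i [], run_wt \<delta> (ts ! i) (Phi ts \<rho> i))) {..<length ts})"
proof -
  have r0: "\<rho> [] = q" using assms unfolding runs_at_def by simp
  have m1: "map (\<lambda>i. run_wt \<delta> (ts ! i) (\<lambda>w. \<rho> (Suc i # w))) [0..<length ts]
     = map (\<lambda>i. snd (restrict (\<lambda>i. (Phi ts \<rho> i [], run_wt \<delta> (ts ! i) (Phi ts \<rho> i))) {..<length ts} i)) [0..<length ts]"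
  proof (rule map_cong[OF refl])
    fix i assume "i \<in> set [0..<length ts]"
    then have i: "i < length ts" by simp
    then show "run_wt \<delta> (ts ! i) (\<lambda>w. \<rho> (Suc i # w)) =
      snd (restrict (\<lambda>i. (Phi ts \<rho> i [], run_wt \<delta> (ts ! i) (Phi ts \<rho> i))) {..<length ts} i)"
      by (simp add: Phi_def run_wt_child[OF i])
  qed
  have m2: "map (\<lambda>i. \<rho> [Suc i]) [0..<length ts]
     = map (\<lambda>i. fst (restrict (\<lambda>i. (Phi ts \<rho> i [], run_wt \<delta> (ts ! i) (Phi ts \<rho> i))) {..<length ts} i)) [0..<length ts]"
  proof (rule map_cong[OF refl])
    fix i assume "i \<in> set [0..<length ts]"
    then have i: "i < length ts" by simp
    then show "\<rho> [Suc i] =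
      fst (restrict (\<lambda>i. (Phi ts \<rho> i [], run_wt \<delta> (ts ! i) (Phi ts \<rho> i))) {..<length ts} i)"
      by (simp add: Phi_def)
  qed
  show ?thesis unfolding run_wt_Nd comb_def m1 m2 r0 ..
qed

context wsetup
begin

lemma wt_in_H: "t \<in> trees Sig rk \<Longrightarrow> \<forall>\<rho>\<in>runs Q t. run_wt \<delta> t \<rho> \<in> H"
proof (induction t rule: trees.induct)
  case (1 f ts)
  show ?case
  proof
    fix \<rho> assume r: "\<rho> \<in> runs Q (Nd f ts)"
    have ch: "run_wt \<delta> (ts ! i) (\<lambda>w. \<rho> (Suc i # w)) \<in> H" if i: "i < length ts" for i
    proof -
      have "ts ! i \<in> set ts" using i by simp
      then have A: "\<forall>\<rho>\<in>runs Q (ts ! i). run_wt \<delta> (ts ! i) \<rho> \<in> H" using 1(3) by blast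
      have B: "restrict (\<lambda>w. \<rho> (Suc i # w)) (pos (ts ! i)) \<in> runs Q (ts ! i)"
        using r i by (rule runs_child)
      show ?thesis by (subst run_wt_child[OF i]) (rule bspec[OF A B])
    qed
    have d: "\<delta> (map (\<lambda>i. \<rho> [Suc i]) [0..<length ts]) f (\<rho> []) \<in> H"
    proof (rule gen_in_H)
      show "f \<in> Sig" by (rule 1(1))
      show "length (map (\<lambda>i. \<rho> [Suc i]) [0..<length ts]) = rk f" using 1(2) by simp
      show "set (map (\<lambda>i. \<rho> [Suc i]) [0..<length ts]) \<subseteq> Q" using runs_child_root[OF r] by auto
      show "\<rho> [] \<in> Q" using r by (rule runs_root)
    qed
    show "run_wt \<delta> (Nd f ts) \<rho> \<in> H"
      unfolding run_wt_Nd
      by (rule prod_list_mult_mem[OF H_mult _ d]) (auto simp: ch)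
  qed
qed


lemma p_xi_Nd:
  assumes q: "q \<in> Q" and ts: "\<forall>t\<in>set ts. t \<in> trees Sig rk"
  shows "p_xi Q \<delta> (Nd f ts) q b =
    (\<Sum>x\<in>Pi\<^sub>E {..<length ts} (\<lambda>_. Q \<times> H).
       if comb \<delta> f (length ts) q x = b
       then (\<Prod>i\<in>{..<length ts}. p_xi Q \<delta> (ts ! i) (fst (x i)) (snd (x i))) else 0)"
proof -
  let ?k = "length ts"
  let ?A = "runs_at Q q (Nd f ts)"
  let ?B = "Pi\<^sub>E {..<?k} (\<lambda>i. runs Q (ts ! i))"
  let ?sg = "\<lambda>i s. (s [], run_wt \<delta> (ts ! i) s)"
  let ?W = "\<lambda>\<sigma>. comb \<delta> f ?k q (restrict (\<lambda>i. ?sg i (\<sigma> i)) {..<?k})"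
  have bij: "bij_betw (Phi ts) ?A ?B" by (rule Phi_bij[OF q])
  have 1: "{\<rho> \<in> ?A. run_wt \<delta> (Nd f ts) \<rho> = b} = {\<rho> \<in> ?A. ?W (Phi ts \<rho>) = b}"
  proof (rule Collect_cong)
    fix \<rho> show "(\<rho> \<in> ?A \<and> run_wt \<delta> (Nd f ts) \<rho> = b) = (\<rho> \<in> ?A \<and> ?W (Phi ts \<rho>) = b)"
      using wt_Phi[of \<rho> Q q f ts \<delta>] by auto
  qed
  have "card {\<rho> \<in> ?A. ?W (Phi ts \<rho>) = b} = card (Phi ts ` {\<rho> \<in> ?A. ?W (Phi ts \<rho>) = b})"
  proof (rule card_image[symmetric])
    show "inj_on (Phi ts) {\<rho> \<in> ?A. ?W (Phi ts \<rho>) = b}"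
      using bij_betw_imp_inj_on[OF bij] by (rule inj_on_subset) auto
  qed
  also have "\<dots> = card {\<sigma> \<in> ?B. ?W \<sigma> = b}"
    using bij_betw_filter_image[OF bij, of "\<lambda>\<sigma>. ?W \<sigma> = b"] by simp
  also have "\<dots> = (\<Sum>x\<in>Pi\<^sub>E {..<?k} (\<lambda>_. Q \<times> H).
       if comb \<delta> f ?k q x = b then (\<Prod>i\<in>{..<?k}. card {s \<in> runs Q (ts ! i). ?sg i s = x i}) else 0)"
  proof (rule card_PiE_filter)
    show "finite {..<?k}" by simp
    show "finite (runs Q (ts ! i))" for i using finQ by (rule finite_runs)
    show "finite (Q \<times> H)" for i :: nat using finQ finite_H by simp
    fix i s assume i: "i \<in> {..<?k}" and s: "s \<in> runs Q (ts ! i)"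
    have "ts ! i \<in> trees Sig rk" using i ts by simp
    then have "run_wt \<delta> (ts ! i) s \<in> H" using wt_in_H s by blast
    then show "?sg i s \<in> Q \<times> H" using runs_root[OF s] by simp
  qed
  also have "\<dots> = (\<Sum>x\<in>Pi\<^sub>E {..<?k} (\<lambda>_. Q \<times> H).
       if comb \<delta> f ?k q x = b then (\<Prod>i\<in>{..<?k}. p_xi Q \<delta> (ts ! i) (fst (x i)) (snd (x i))) else 0)"
  proof -
    have cf: "card {s \<in> runs Q (ts ! i). ?sg i s = x i} = p_xi Q \<delta> (ts ! i) (fst (x i)) (snd (x i))" for i x
    proof -
      have "{s \<in> runs Q (ts ! i). ?sg i s = x i} = {\<rho> \<in> runs_at Q (fst (x i)) (ts ! i). run_wt \<delta> (ts ! i) \<rho> = snd (x i)}"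
        unfolding runs_at_def by (auto simp: prod_eq_iff)
      then show ?thesis unfolding p_xi_def by simp
    qed
    show ?thesis unfolding cf by (rule refl)
  qed
  finally show ?thesis unfolding p_xi_def 1 .
qed

end


context wsetup
begin

abbreviation "P \<equiv> pi_xi Sig rk Q \<delta> F"

lemma pi_pair: "P t (q, b) = (if q \<in> Q \<and> b \<in> H then J (p_xi Q \<delta> t q b) else 0)"
  by (simp add: pi_xi_def)

lemma pi_Nd:
  assumes ts: "\<forall>t\<in>set ts. t \<in> trees Sig rk"
  shows "P (Nd f ts) (q, b) = (if q \<in> Q \<and> b \<in> H then
     J (\<Sum>x\<in>Pi\<^sub>E {..<length ts} (\<lambda>_. Q \<times> H).
       if comb \<delta> f (length ts) q x = b then (\<Prod>i\<in>{..<length ts}. P (ts ! i) (x i)) else 0)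
     else 0)"
proof (cases "q \<in> Q \<and> b \<in> H")
  case False
  have "P (Nd f ts) (q, b) = 0" unfolding pi_pair using False by (rule if_not_P)
  then show ?thesis by (subst if_not_P[OF False])
next
  case True
  let ?k = "length ts"
  let ?X = "Pi\<^sub>E {..<length ts} (\<lambda>_. Q \<times> H)"
  define g where "g x = (if comb \<delta> f ?k q x = b then (\<Prod>i\<in>{..<?k}. p_xi Q \<delta> (ts ! i) (fst (x i)) (snd (x i))) else 0)" for x
  define g' where "g' x = (if comb \<delta> f ?k q x = b then (\<Prod>i\<in>{..<?k}. P (ts ! i) (x i)) else 0)" for x
  have gg: "jf iA pA (g x) = jf iA pA (g' x)" if x: "x \<in> ?X" for x
  proof (cases "comb \<delta> f ?k q x = b")
    case False then show ?thesis unfolding g_def g'_def by simp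
  next
    case c: True
    have "jf iA pA (g x) = jf iA pA (\<Prod>i\<in>{..<?k}. jf iA pA (p_xi Q \<delta> (ts ! i) (fst (x i)) (snd (x i))))"
      unfolding g_def using c by (simp add: jf_prod[of _ _ "\<lambda>i. p_xi Q \<delta> (ts ! i) (fst (x i)) (snd (x i))"])
    also have "(\<Prod>i\<in>{..<?k}. jf iA pA (p_xi Q \<delta> (ts ! i) (fst (x i)) (snd (x i)))) = (\<Prod>i\<in>{..<?k}. P (ts ! i) (x i))"
    proof (rule prod.cong[OF refl])
      fix i assume "i \<in> {..<?k}"
      then have "x i \<in> Q \<times> H" using PiE_mem[OF x] by simp
      then have "P (ts ! i) (x i) = J (p_xi Q \<delta> (ts ! i) (fst (x i)) (snd (x i)))"
        using pi_pair[of "ts ! i" "fst (x i)" "snd (x i)"] by auto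
      then show "jf iA pA (p_xi Q \<delta> (ts ! i) (fst (x i)) (snd (x i))) = P (ts ! i) (x i)"
        by (simp add: J_eq)
    qed
    finally show ?thesis unfolding g'_def using c by simp
  qed
  have "P (Nd f ts) (q, b) = jf iA pA (p_xi Q \<delta> (Nd f ts) q b)" using True by (simp add: pi_pair J_eq)
  also have "\<dots> = jf iA pA (sum g ?X)" unfolding g_def using True ts by (simp add: p_xi_Nd)
  also have "\<dots> = jf iA pA (\<Sum>x\<in>?X. jf iA pA (g x))" by (rule jf_sum)
  also have "\<dots> = jf iA pA (\<Sum>x\<in>?X. jf iA pA (g' x))" using gg by (simp cong: sum.cong)
  also have "\<dots> = jf iA pA (sum g' ?X)" by (rule jf_sum[symmetric])
  finally show ?thesis unfolding g'_def using True by (simp add: J_eq)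
qed

lemma pi_cong:
  assumes "\<forall>t\<in>set ts. t \<in> trees Sig rk" "\<forall>t\<in>set ts'. t \<in> trees Sig rk" "length ts = length ts'"
    and "\<forall>i<length ts. P (ts ! i) = P (ts' ! i)"
  shows "P (Nd f ts) = P (Nd f ts')"
proof (rule ext)
  fix z :: "'q \<times> 'b"
  obtain q b where z: "z = (q, b)" by fastforce
  have pr: "(\<Prod>i\<in>{..<length ts'}. P (ts ! i) (x i)) = (\<Prod>i\<in>{..<length ts'}. P (ts' ! i) (x i))" for x
    using assms(3,4) by (intro prod.cong) auto
  show "P (Nd f ts) z = P (Nd f ts') z"
    unfolding z pi_Nd[OF assms(1)] pi_Nd[OF assms(2)] assms(3) pr ..
qed

end


fun subt :: "'f tree \<Rightarrow> nat list \<Rightarrow> 'f tree" where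
  "subt t [] = t"
| "subt (Nd f ts) (i # w) = subt (ts ! (i - 1)) w"

lemma trees_NdD:
  assumes "Nd f ts \<in> trees Sig rk"
  shows "f \<in> Sig" "length ts = rk f" "\<forall>t\<in>set ts. t \<in> trees Sig rk"
  using assms by (cases rule: trees.cases, simp)+

lemma subt_trees: "t \<in> trees Sig rk \<Longrightarrow> w \<in> pos t \<Longrightarrow> subt t w \<in> trees Sig rk"
proof (induction w arbitrary: t)
  case Nil then show ?case by simp
next
  case (Cons j w)
  obtain f ts where t: "t = Nd f ts" by (cases t)
  from Cons.prems(2) obtain i where j: "j = Suc i" and i: "i < length ts" and w: "w \<in> pos (ts ! i)"
    unfolding t by (auto simp: pos_Nd)
  have "ts ! i \<in> trees Sig rk" using trees_NdD(3)[OF Cons.prems(1)[unfolded t]] i by simp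
  then show ?case using Cons.IH w unfolding t j by simp
qed

lemma prod_list_nonzero:
  fixes xs :: "'a::{monoid_mult, mult_zero} list"
  assumes "prod_list xs * d \<noteq> 0"
  shows "d \<noteq> 0" "\<forall>x\<in>set xs. x \<noteq> 0"
proof -
  show "d \<noteq> 0" using assms by auto
  have "prod_list xs \<noteq> 0" using assms by auto
  then show "\<forall>x\<in>set xs. x \<noteq> 0"
  proof (induction xs)
    case (Cons a xs)
    have a: "a \<noteq> 0" using Cons.prems by auto
    have "prod_list xs \<noteq> 0" using Cons.prems by auto
    then show ?case using Cons.IH a by simp
  qed simp
qed

lemma prod_list_ones: "(\<And>x. x \<in> set xs \<Longrightarrow> x = 1) \<Longrightarrow> prod_list xs = (1::'a::monoid_mult)"
  by (induction xs) auto

context wsetup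
begin

abbreviation "Rs \<equiv> R_states Sig rk Q \<delta> F"
abbreviation R\<delta> :: "('q \<times> 'b \<Rightarrow> nat) list \<Rightarrow> 'f \<Rightarrow> ('q \<times> 'b \<Rightarrow> nat) \<Rightarrow> 'b" where "R\<delta> \<equiv> R_delta Sig rk Q \<delta> F"
abbreviation "RF \<equiv> R_final Sig rk Q \<delta> F"

definition rho0 :: "'f tree \<Rightarrow> nat list \<Rightarrow> 'q \<times> 'b \<Rightarrow> nat" where
  "rho0 t = restrict (\<lambda>w. P (subt t w)) (pos t)"

lemma P_in_Rs: "t \<in> trees Sig rk \<Longrightarrow> P t \<in> Rs"
  unfolding R_states_def by (rule imageI)

lemma rho0_runs: "t \<in> trees Sig rk \<Longrightarrow> rho0 t \<in> runs Rs t"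
  unfolding runs_def rho0_def
proof (rule PiE_I)
  fix w assume "t \<in> trees Sig rk" "w \<in> pos t"
  then have "subt t w \<in> trees Sig rk" by (rule subt_trees)
  then show "restrict (\<lambda>w. P (subt t w)) (pos t) w \<in> Rs" using \<open>w \<in> pos t\<close> by (simp add: P_in_Rs)
qed simp

lemma rho0_root: "rho0 t [] = P t"
  unfolding rho0_def by simp

lemma Rdelta_eq:
  assumes t: "Nd f ts \<in> trees Sig rk"
  shows "R\<delta> (map (\<lambda>i. P (ts ! i)) [0..<length ts]) f p = (if p \<in> Rs \<and> p = P (Nd f ts) then 1 else 0)"
proof (cases "p \<in> Rs")
  case False then show ?thesis unfolding R_delta_def by simp
next
  case True
  let ?ps = "map (\<lambda>i. P (ts ! i)) [0..<length ts]"
  have ch: "\<forall>t\<in>set ts. t \<in> trees Sig rk" by (rule trees_NdD(3)[OF t])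
  have cond: "f \<in> Sig \<and> length ?ps = rk f \<and> set ?ps \<subseteq> Rs \<and> p \<in> Rs"
    using trees_NdD[OF t] True P_in_Rs by auto
  let ?Pr = "\<lambda>ts'. length ts' = length ?ps \<and> (\<forall>i<length ?ps. ts' ! i \<in> trees Sig rk \<and> P (ts' ! i) = ?ps ! i)"
  have ex: "?Pr ts" using ch by simp
  define ts' where "ts' = (SOME ts'. ?Pr ts')"
  have pr: "?Pr ts'" unfolding ts'_def using ex by (rule someI)
  have "P (Nd f ts') = P (Nd f ts)"
  proof (rule pi_cong)
    show "\<forall>t\<in>set ts'. t \<in> trees Sig rk" using pr by (auto simp: in_set_conv_nth)
    show "\<forall>t\<in>set ts. t \<in> trees Sig rk" by (rule ch)
    show "length ts' = length ts" using pr by simp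
    show "\<forall>i<length ts'. P (ts' ! i) = P (ts ! i)" using pr by simp
  qed
  moreover have "R\<delta> ?ps f p = (if p = P (Nd f ts') then 1 else 0)"
    unfolding R_delta_def by (subst if_P[OF cond]) (simp only: ts'_def[symmetric] Let_def)
  ultimately show ?thesis using True by simp
qed


lemma rho0_child:
  assumes "i < length ts" "w \<in> pos (ts ! i)"
  shows "rho0 (Nd f ts) (Suc i # w) = rho0 (ts ! i) w"
  using assms unfolding rho0_def by simp

lemma R_unique:
  "t \<in> trees Sig rk \<Longrightarrow> run_wt R\<delta> t (rho0 t) = 1 \<and> (\<forall>\<rho>\<in>runs Rs t. run_wt R\<delta> t \<rho> \<noteq> 0 \<longrightarrow> \<rho> = rho0 t)"
proof (induction t rule: trees.induct)
  case (1 f ts)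
  have tN: "Nd f ts \<in> trees Sig rk" using 1 by (intro trees.intros) auto
  have IH1: "run_wt R\<delta> (ts ! i) (rho0 (ts ! i)) = 1" if "i < length ts" for i
    using bspec[OF 1(3) nth_mem[OF that]] by simp
  have IH2: "\<forall>\<rho>\<in>runs Rs (ts ! i). run_wt R\<delta> (ts ! i) \<rho> \<noteq> 0 \<longrightarrow> \<rho> = rho0 (ts ! i)" if "i < length ts" for i
    using bspec[OF 1(3) nth_mem[OF that]] by simp
  have mP: "map (\<lambda>i. rho0 (Nd f ts) [Suc i]) [0..<length ts] = map (\<lambda>i. P (ts ! i)) [0..<length ts]"
    by (rule map_cong[OF refl]) (simp add: rho0_def)
  have part1: "run_wt R\<delta> (Nd f ts) (rho0 (Nd f ts)) = 1"
  proof -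
    have c1: "x = 1" if xin: "x \<in> set (map (\<lambda>i. run_wt R\<delta> (ts ! i) (\<lambda>w. rho0 (Nd f ts) (Suc i # w))) [0..<length ts])" for x
    proof -
      obtain i where i: "i < length ts" and x: "x = run_wt R\<delta> (ts ! i) (\<lambda>w. rho0 (Nd f ts) (Suc i # w))"
        using xin by auto
      have "x = run_wt R\<delta> (ts ! i) (rho0 (ts ! i))"
        unfolding x by (rule run_wt_local) (simp add: rho0_child[OF i])
      then show ?thesis using IH1[OF i] by simp
    qed
    have "R\<delta> (map (\<lambda>i. P (ts ! i)) [0..<length ts]) f (P (Nd f ts)) = 1"
      using Rdelta_eq[OF tN] P_in_Rs[OF tN] by simp
    moreover have pl: "prod_list (map (\<lambda>i. run_wt R\<delta> (ts ! i) (\<lambda>w. rho0 (Nd f ts) (Suc i # w))) [0..<length ts]) = 1"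
      by (rule prod_list_ones) (rule c1)
    ultimately show ?thesis unfolding run_wt_Nd pl mP rho0_root by simp
  qed
  have part2: "\<rho> = rho0 (Nd f ts)" if r: "\<rho> \<in> runs Rs (Nd f ts)" and nz: "run_wt R\<delta> (Nd f ts) \<rho> \<noteq> 0" for \<rho>
  proof -
    have nz': "prod_list (map (\<lambda>i. run_wt R\<delta> (ts ! i) (\<lambda>w. \<rho> (Suc i # w))) [0..<length ts])
      * R\<delta> (map (\<lambda>i. \<rho> [Suc i]) [0..<length ts]) f (\<rho> []) \<noteq> 0"
      using nz unfolding run_wt_Nd .
    have chi: "restrict (\<lambda>w. \<rho> (Suc i # w)) (pos (ts ! i)) = rho0 (ts ! i)" if i: "i < length ts" for i
    proof -
      have "run_wt R\<delta> (ts ! i) (\<lambda>w. \<rho> (Suc i # w)) \<noteq> 0"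
        using prod_list_nonzero(2)[OF nz'] i by auto
      then have "run_wt R\<delta> (ts ! i) (restrict (\<lambda>w. \<rho> (Suc i # w)) (pos (ts ! i))) \<noteq> 0"
        using run_wt_child[OF i] by metis
      moreover have "restrict (\<lambda>w. \<rho> (Suc i # w)) (pos (ts ! i)) \<in> runs Rs (ts ! i)"
        using r i by (rule runs_child)
      ultimately show ?thesis using IH2[OF i] by blast
    qed
    have rc: "\<rho> [Suc i] = P (ts ! i)" if i: "i < length ts" for i
    proof -
      have "restrict (\<lambda>w. \<rho> (Suc i # w)) (pos (ts ! i)) [] = rho0 (ts ! i) []" using chi[OF i] by simp
      then show ?thesis by (simp add: rho0_root)
    qed
    have mr: "map (\<lambda>i. \<rho> [Suc i]) [0..<length ts] = map (\<lambda>i. P (ts ! i)) [0..<length ts]"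
      by (rule map_cong[OF refl]) (simp add: rc)
    have "R\<delta> (map (\<lambda>i. P (ts ! i)) [0..<length ts]) f (\<rho> []) \<noteq> 0"
      using prod_list_nonzero(1)[OF nz'] unfolding mr .
    then have root: "\<rho> [] = P (Nd f ts)" unfolding Rdelta_eq[OF tN] by (simp split: if_splits)
    have ext\<rho>: "\<rho> \<in> extensional (pos (Nd f ts))" using r unfolding runs_def by (simp add: PiE_iff)
    show ?thesis
    proof (rule ext)
      fix w show "\<rho> w = rho0 (Nd f ts) w"
      proof (cases "w \<in> pos (Nd f ts)")
        case False
        then show ?thesis using extensional_arb[OF ext\<rho> False] unfolding rho0_def by simp
      next
        case True
        then show ?thesis
        proof (cases rule: pos_NdE)
          case 1 then show ?thesis using root by (simp add: rho0_root)
        next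
          case (2 i w')
          have "\<rho> w = restrict (\<lambda>w. \<rho> (Suc i # w)) (pos (ts ! i)) w'" using 2 by simp
          also have "\<dots> = rho0 (ts ! i) w'" using chi[OF 2(2)] by simp
          also have "\<dots> = rho0 (Nd f ts) w" using 2 by (simp add: rho0_child)
          finally show ?thesis .
        qed
      qed
    qed
  qed
  show ?case using part1 part2 by blast
qed

end


context wsetup
begin

lemma finite_Rs: "finite Rs"
proof -
  have "Rs \<subseteq> {g. \<forall>x. (x \<in> Q \<times> H \<longrightarrow> g x \<in> {..<iA + pA}) \<and> (x \<notin> Q \<times> H \<longrightarrow> g x = 0)}"
  proof
    fix g assume "g \<in> Rs"
    then obtain t where g: "g = P t" unfolding R_states_def by blast
    show "g \<in> {g. \<forall>x. (x \<in> Q \<times> H \<longrightarrow> g x \<in> {..<iA + pA}) \<and> (x \<notin> Q \<times> H \<longrightarrow> g x = 0)}"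
    proof (intro CollectI allI conjI impI)
      fix x :: "'q \<times> 'b"
      obtain q b where x: "x = (q, b)" by fastforce
      show "g x \<in> {..<iA + pA}" if "x \<in> Q \<times> H"
        using that J_bound unfolding g x pi_pair by simp
      show "g x = 0" if "x \<notin> Q \<times> H"
        using that unfolding g x pi_pair by auto
    qed
  qed
  moreover have "finite {g. \<forall>x. (x \<in> Q \<times> H \<longrightarrow> g x \<in> {..<iA + pA}) \<and> (x \<notin> Q \<times> H \<longrightarrow> g x = 0)}"
    by (rule finite_set_of_finite_funs) (use finQ finite_H in simp_all)
  ultimately show ?thesis by (rule finite_subset)
qed

lemma run_sem_R: "t \<in> trees Sig rk \<Longrightarrow> run_sem Rs R\<delta> RF t = RF (P t)"
proof -
  assume t: "t \<in> trees Sig rk"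
  have fin: "finite (runs Rs t)" using finite_Rs by (rule finite_runs)
  have r0: "rho0 t \<in> runs Rs t" using t by (rule rho0_runs)
  have U: "run_wt R\<delta> t (rho0 t) = 1" "\<forall>\<rho>\<in>runs Rs t. run_wt R\<delta> t \<rho> \<noteq> 0 \<longrightarrow> \<rho> = rho0 t"
    using R_unique[OF t] by auto
  have z: "(\<Sum>\<rho>\<in>runs Rs t - {rho0 t}. run_wt R\<delta> t \<rho> * RF (\<rho> [])) = 0"
  proof (rule sum.neutral, rule ballI)
    fix \<rho> assume "\<rho> \<in> runs Rs t - {rho0 t}"
    then have "run_wt R\<delta> t \<rho> = 0" using U(2) by auto
    then show "run_wt R\<delta> t \<rho> * RF (\<rho> []) = 0" by simp
  qed
  have "run_sem Rs R\<delta> RF t = run_wt R\<delta> t (rho0 t) * RF (rho0 t []) + (\<Sum>\<rho>\<in>runs Rs t - {rho0 t}. run_wt R\<delta> t \<rho> * RF (\<rho> []))"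
    unfolding run_sem_def by (rule sum.remove[OF fin r0])
  also have "\<dots> = RF (P t)" unfolding z U(1) rho0_root by simp
  finally show ?thesis .
qed

lemma run_sem_A: "t \<in> trees Sig rk \<Longrightarrow> run_sem Q \<delta> F t = RF (P t)"
proof -
  assume t: "t \<in> trees Sig rk"
  let ?g = "\<lambda>\<rho>. (\<rho> [], run_wt \<delta> t \<rho>)"
  have fin: "finite (runs Q t)" using finQ by (rule finite_runs)
  have gi: "?g ` runs Q t \<subseteq> Q \<times> H"
  proof (rule image_subsetI)
    fix \<rho> assume r: "\<rho> \<in> runs Q t"
    then show "?g \<rho> \<in> Q \<times> H" using runs_root[OF r] wt_in_H[OF t] by simp
  qed
  have "run_sem Q \<delta> F t = (\<Sum>y\<in>Q \<times> H. \<Sum>\<rho>\<in>{\<rho> \<in> runs Q t. ?g \<rho> = y}. run_wt \<delta> t \<rho> * F (\<rho> []))"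
    unfolding run_sem_def by (rule sum.group[symmetric, OF fin _ gi]) (use finQ finite_H in simp)
  also have "\<dots> = (\<Sum>y\<in>Q \<times> H. nmul (P t y) (snd y * F (fst y)))"
  proof (rule sum.cong[OF refl])
    fix y assume y: "y \<in> Q \<times> H"
    obtain q b where yqb: "y = (q, b)" by fastforce
    have q: "q \<in> Q" and b: "b \<in> H" using y yqb by auto
    have "(\<Sum>\<rho>\<in>{\<rho> \<in> runs Q t. ?g \<rho> = y}. run_wt \<delta> t \<rho> * F (\<rho> [])) = (\<Sum>\<rho>\<in>{\<rho> \<in> runs Q t. ?g \<rho> = y}. b * F q)"
      by (rule sum.cong[OF refl]) (auto simp: yqb)
    also have "\<dots> = nmul (card {\<rho> \<in> runs Q t. ?g \<rho> = y}) (b * F q)" by (rule sum_const_nmul)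
    also have "\<dots> = nmul (J (p_xi Q \<delta> t q b)) (b * F q)"
    proof -
      have "{\<rho> \<in> runs Q t. ?g \<rho> = y} = {\<rho> \<in> runs_at Q q t. run_wt \<delta> t \<rho> = b}"
        unfolding runs_at_def yqb by auto
      then have cd: "card {\<rho> \<in> runs Q t. ?g \<rho> = y} = p_xi Q \<delta> t q b" unfolding p_xi_def by simp
      have "b * F q \<in> HF" unfolding HF_A_def using q b by blast
      then show ?thesis unfolding cd by (rule nmul_J[symmetric])
    qed
    also have "\<dots> = nmul (P t y) (snd y * F (fst y))" unfolding yqb pi_pair using q b by simp
    finally show "(\<Sum>\<rho>\<in>{\<rho> \<in> runs Q t. ?g \<rho> = y}. run_wt \<delta> t \<rho> * F (\<rho> [])) = nmul (P t y) (snd y * F (fst y))" .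
  qed
  also have "\<dots> = RF (P t)" unfolding R_final_def by (simp add: case_prod_beta)
  finally show ?thesis .
qed

end

theorem corollary7p5:
  fixes Sig :: "'f set" and rk :: "'f \<Rightarrow> nat"
    and Q :: "'q set" and \<delta> :: "'q list \<Rightarrow> 'f \<Rightarrow> 'q \<Rightarrow> 'b::strong_bimonoid" and F :: "'q \<Rightarrow> 'b"
  assumes "ranked_alphabet Sig rk"
    and "bi_locally_finite TYPE('b)"
    and "wta Sig rk Q \<delta> F"
  shows "\<forall>\<xi>\<in>trees Sig rk.
           run_sem Q \<delta> F \<xi> =
           run_sem (R_states Sig rk Q \<delta> F) (R_delta Sig rk Q \<delta> F) (R_final Sig rk Q \<delta> F) \<xi>"
proof -
  interpret wsetup Sig rk Q \<delta> F
    using assms unfolding ranked_alphabet_def wta_def by unfold_locales auto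
  show ?thesis using run_sem_A run_sem_R by simp
qed

end
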